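(* Let $F_1$ and $F_2$ be finite fields with $|F_1|\le |F_2|$. Then there exists an $|F_1|\times|F_2|$ Latin-sum array (with $A=F_1$, $B=F_2$) over an alphabet $C$ with $$|C|=\begin{cases}4, & F_1=F_2=\mathbb{Z}_3,\\ |F_2|, & \text{otherwise}.\end{cases}$$
   Context: Let $F_1,F_2$ be finite fields with $|F_1|\le|F_2|$, and let $A\subseteq F_1$, $B\subseteq F_2$ with $|A|\le|B|$. A table $L$ of size $|A|\times|B|$ with entries from a set $C$, whose rows are indexed by the elements of $A$ and columns by the elements of $B$ (entry $L_{x,y}$ for $x\in A,y\in B$), is called a Latin-sum array over $C$ if for every two distinct pairs $(x_1,y_1),(x_2,y_2)\in A\times B$: (i) if $x_1+x_2=0$ in $F_1$ then $L_{x_1,y_1}\ne L_{x_2,y_2}$; and (ii) if $y_1+y_2=0$ in $F_2$ then $L_{x_1,y_1}\ne L_{x_2,y_2}$. *)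

theory Defs
  imports Main
begin

definition latin_sum_array ::
  "'a::field set \<Rightarrow> 'b::field set \<Rightarrow> 'c set \<Rightarrow> ('a \<Rightarrow> 'b \<Rightarrow> 'c) \<Rightarrow> bool" where
  "latin_sum_array A B C L \<longleftrightarrow>
     (\<forall>x\<in>A. \<forall>y\<in>B. L x y \<in> C) \<and>
     (\<forall>x1\<in>A. \<forall>y1\<in>B. \<forall>x2\<in>A. \<forall>y2\<in>B. (x1, y1) \<noteq> (x2, y2) \<longrightarrow>
        (x1 + x2 = 0 \<longrightarrow> L x1 y1 \<noteq> L x2 y2) \<and>
        (y1 + y2 = 0 \<longrightarrow> L x1 y1 \<noteq> L x2 y2))"

end

theory Submission
  imports Defs
begin

definition negi :: "nat \<Rightarrow> nat \<Rightarrow> nat" where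
  "negi m i = (if even m then i else (m - i) mod m)"

lemma negi_odd: "odd m \<Longrightarrow> i < m \<Longrightarrow> negi m i = (if i = 0 then 0 else m - i)"
  by (auto simp: negi_def)

lemma negi_even: "even m \<Longrightarrow> negi m i = i"
  by (auto simp: negi_def)

definition goodL :: "nat \<Rightarrow> nat \<Rightarrow> nat \<Rightarrow> (nat \<Rightarrow> nat \<Rightarrow> nat) \<Rightarrow> bool" where
  "goodL m n c L \<longleftrightarrow> (\<forall>i<m. \<forall>j<n. L i j < c) \<and>
    (\<forall>i1 j1 i2 j2. i1 < m \<longrightarrow> j1 < n \<longrightarrow> i2 < m \<longrightarrow> j2 < n \<longrightarrow> (i1, j1) \<noteq> (i2, j2) \<longrightarrow>
       (i2 = negi m i1 \<or> j2 = negi n j1) \<longrightarrow> L i1 j1 \<noteq> L i2 j2)"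

lemma inv_split:
  fixes r :: "'a \<Rightarrow> nat"
  assumes fin: "finite S" and f: "\<And>x. x \<in> S \<Longrightarrow> f x \<in> S \<and> f (f x) = x" and r: "inj_on r S"
  defines "P \<equiv> {x\<in>S. r x < r (f x)}"
  shows "card S = card {x\<in>S. f x = x} + 2 * card P"
proof -
  have Pf: "P \<inter> f ` P = {}"
  proof (rule ccontr)
    assume "P \<inter> f ` P \<noteq> {}"
    then obtain y where y: "y \<in> P" "f y \<in> P" by blast
    then have "r y < r (f y)" "r (f y) < r (f (f y))" unfolding P_def by auto
    moreover have "f (f y) = y" using y f unfolding P_def by auto
    ultimately show False by simp
  qed
  have FP: "{x\<in>S. f x = x} \<inter> (P \<union> f ` P) = {}"
    using f unfolding P_def by force
  have U: "S = {x\<in>S. f x = x} \<union> (P \<union> f ` P)"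
  proof
    show "S \<subseteq> {x\<in>S. f x = x} \<union> (P \<union> f ` P)"
    proof
      fix x assume x: "x \<in> S"
      show "x \<in> {x\<in>S. f x = x} \<union> (P \<union> f ` P)"
      proof (cases "f x = x")
        case False
        then have "r x \<noteq> r (f x)" using r f x by (metis inj_on_def)
        then have "x \<in> P \<or> f x \<in> P" using x f unfolding P_def by auto
        then show ?thesis using f x by (metis UnI1 UnI2 image_eqI)
      qed (use x in auto)
    qed
    show "{x\<in>S. f x = x} \<union> (P \<union> f ` P) \<subseteq> S" using f unfolding P_def by auto
  qed
  have injf: "inj_on f P" unfolding P_def inj_on_def using f by (metis (mono_tags, lifting) mem_Collect_eq)
  have finP: "finite P" using fin unfolding P_def by auto
  have "card S = card {x\<in>S. f x = x} + card (P \<union> f ` P)"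
    using U FP fin by (metis card_Un_disjoint finite_Un)
  also have "card (P \<union> f ` P) = card P + card (f ` P)"
    using Pf finP by (simp add: card_Un_disjoint)
  also have "card (f ` P) = card P" using injf by (simp add: card_image)
  finally show ?thesis by simp
qed

lemma field_index:
  shows "\<exists>\<alpha>::'a::{finite,field} \<Rightarrow> nat. inj \<alpha> \<and> (\<forall>x. \<alpha> x < card (UNIV::'a set)) \<and>
            (\<forall>x. \<alpha> (-x) = negi (card (UNIV::'a set)) (\<alpha> x))"
proof -
  let ?n = "card (UNIV::'a set)"
  obtain h :: "'a \<Rightarrow> nat" where h: "bij_betw h UNIV {0..<?n}"
    using ex_bij_betw_finite_nat[of "UNIV::'a set"] by auto
  have hinj: "inj h" using h by (simp add: bij_betw_def)
  have hlt: "\<And>x. h x < ?n" using h bij_betwE by fastforce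
  show ?thesis
  proof (cases "(1::'a) + 1 = 0")
    case True
    have neg: "\<And>x::'a. -x = x"
    proof -
      fix x :: 'a
      have "x + x = (1 + 1) * x" by (simp add: distrib_right)
      then have "x + x = 0" using True by simp
      then show "-x = x" by (rule minus_unique)
    qed
    have "?n = card {x\<in>(UNIV::'a set). x + 1 = x} + 2 * card {x\<in>(UNIV::'a set). h x < h (x + 1)}"
    proof (rule inv_split)
      have T2: "(2::'a) = 0" using True by simp
      show "\<And>x::'a. x \<in> UNIV \<Longrightarrow> x + 1 \<in> UNIV \<and> x + 1 + 1 = x"
        using T2 by (simp add: add.assoc)
    qed (use hinj in auto)
    moreover have "{x\<in>(UNIV::'a set). x + 1 = x} = {}" by auto
    ultimately have "even ?n" by simp
    then show ?thesis by (intro exI[of _ h]) (simp add: hinj hlt neg negi_even)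
  next
    case False
    have fix0: "\<And>x::'a. -x = x \<Longrightarrow> x = 0"
    proof -
      fix x :: 'a assume "-x = x"
      then have "x + x = x + - x" by simp
      then have "x + x = 0" by simp
      then have "(1 + 1) * x = 0" by (simp add: distrib_right)
      then show "x = 0" using False by simp
    qed
    define P where "P = {x\<in>(UNIV::'a set). h x < h (- x)}"
    have cardn: "?n = card {x\<in>(UNIV::'a set). - x = x} + 2 * card P"
      unfolding P_def by (rule inv_split) (auto simp: hinj)
    moreover have "{x\<in>(UNIV::'a set). - x = x} = {0}"
    proof -
      have "(2::'a) \<noteq> 0" using False by simp
      then show ?thesis by auto
    qed
    ultimately have n: "?n = 1 + 2 * card P" by simp
    define k where "k = card P"
    obtain g :: "'a \<Rightarrow> nat" where g: "bij_betw g P {0..<k}"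
      using ex_bij_betw_finite_nat[of P] unfolding k_def by auto
    have glt: "\<And>x. x \<in> P \<Longrightarrow> g x < k" using g bij_betwE by fastforce
    have ginj: "\<And>x y. x \<in> P \<Longrightarrow> y \<in> P \<Longrightarrow> g x = g y \<Longrightarrow> x = y"
      using g by (metis bij_betw_def inj_onD)
    have P0: "0 \<notin> P" unfolding P_def by auto
    have Pneg: "\<And>x. x \<noteq> 0 \<Longrightarrow> x \<in> P \<longleftrightarrow> -x \<notin> P"
    proof -
      fix x :: 'a assume x: "x \<noteq> 0"
      have "-x \<noteq> x" using fix0 x by metis
      then have "h (-x) \<noteq> h x" using hinj by (metis injD)
      then show "x \<in> P \<longleftrightarrow> -x \<notin> P" unfolding P_def by auto
    qed
    define \<alpha> where "\<alpha> x = (if x = 0 then 0 else if x \<in> P then g x + 1 else ?n - (g (-x) + 1))" for x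
    have odd: "odd ?n" using n by simp
    have a1: "\<And>x. \<alpha> x < ?n"
    proof -
      fix x :: 'a
      consider "x = 0" | "x \<noteq> 0" "x \<in> P" | "x \<noteq> 0" "-x \<in> P" using Pneg[of x] by blast
      then show "\<alpha> x < ?n"
      proof cases
        case 2 then show ?thesis using glt[of x] n unfolding \<alpha>_def k_def by auto
      next
        case 3 then have "x \<notin> P" using Pneg[of x] by blast
        then show ?thesis using 3 n unfolding \<alpha>_def by auto
      qed (use n \<alpha>_def in auto)
    qed
    have a2: "\<And>x. \<alpha> (-x) = negi ?n (\<alpha> x)"
    proof -
      fix x :: 'a
      have N: "negi ?n (\<alpha> x) = (if \<alpha> x = 0 then 0 else ?n - \<alpha> x)"
        by (rule negi_odd[OF odd a1[of x]])
      consider "x = 0" | "x \<noteq> 0" "x \<in> P" | "x \<noteq> 0" "-x \<in> P" using Pneg[of x] by blast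
      then show "\<alpha> (-x) = negi ?n (\<alpha> x)"
      proof cases
        case 1 then show ?thesis by (simp add: negi_def \<alpha>_def)
      next
        case 2
        then have "-x \<notin> P" "-x \<noteq> 0" using Pneg[of x] by auto
        then have "\<alpha> (-x) = ?n - (g x + 1)" "\<alpha> x = g x + 1" using 2 unfolding \<alpha>_def by auto
        then show ?thesis unfolding N by simp
      next
        case 3
        then have "x \<notin> P" using Pneg[of x] by auto
        then have "\<alpha> (-x) = g (-x) + 1" "\<alpha> x = ?n - (g (-x) + 1)" using 3 unfolding \<alpha>_def by auto
        moreover have "g (-x) < k" using glt 3 by auto
        ultimately show ?thesis unfolding N using n k_def by auto
      qed
    qed
    have a3: "inj \<alpha>"
    proof (rule injI)
      fix x y assume e: "\<alpha> x = \<alpha> y"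
      have cls: "\<And>z. z = 0 \<or> (z \<noteq> 0 \<and> z \<in> P \<and> \<alpha> z = g z + 1 \<and> g z < k) \<or>
             (z \<noteq> 0 \<and> z \<notin> P \<and> -z \<in> P \<and> \<alpha> z = ?n - (g (-z) + 1) \<and> g (-z) < k)"
      proof -
        fix z :: 'a
        show "?thesis z"
        proof (cases "z = 0")
          case False
          show ?thesis
          proof (cases "z \<in> P")
            case True then show ?thesis using False glt[of z] unfolding \<alpha>_def by simp
          next
            case F2: False
            then have "-z \<in> P" using Pneg[of z] False by blast
            then show ?thesis using False F2 glt[of "-z"] unfolding \<alpha>_def by simp
          qed
        qed simp
      qed
      have z0: "\<And>z. \<alpha> z = 0 \<longleftrightarrow> z = 0"
      proof -
        fix z :: 'a
        have a0: "\<alpha> 0 = 0" unfolding \<alpha>_def by simp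
        show "\<alpha> z = 0 \<longleftrightarrow> z = 0" using cls[of z] n a0 unfolding k_def by auto
      qed
      show "x = y"
      proof -
        consider "x = 0" | "x \<noteq> 0" "x \<in> P" "\<alpha> x = g x + 1" "g x < k"
          | "x \<noteq> 0" "x \<notin> P" "-x \<in> P" "\<alpha> x = ?n - (g (-x) + 1)" "g (-x) < k" using cls by blast
        then show ?thesis
        proof cases
          case 1 then show ?thesis using e z0 by metis
        next
          case 2
          consider "y = 0" | "y \<noteq> 0" "y \<in> P" "\<alpha> y = g y + 1" "g y < k"
            | "y \<noteq> 0" "y \<notin> P" "-y \<in> P" "\<alpha> y = ?n - (g (-y) + 1)" "g (-y) < k" using cls by blast
          then show ?thesis
          proof cases
            case 1 then show ?thesis using e z0 by metis
          next
            case y2: 2 then show ?thesis using 2 e ginj by auto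
          next
            case 3 then show ?thesis using 2 e n k_def by auto
          qed
        next
          case 3
          consider "y = 0" | "y \<noteq> 0" "y \<in> P" "\<alpha> y = g y + 1" "g y < k"
            | "y \<noteq> 0" "y \<notin> P" "-y \<in> P" "\<alpha> y = ?n - (g (-y) + 1)" "g (-y) < k" using cls by blast
          then show ?thesis
          proof cases
            case 1 then show ?thesis using e z0 by metis
          next
            case 2 then show ?thesis using 3 e n k_def by auto
          next
            case y3: 3
            then have "g (-x) = g (-y)" using 3 e n k_def by auto
            then have "-x = -y" using ginj[of "-x" "-y"] 3 y3 by blast
            then show ?thesis by simp
          qed
        qed
      qed
    qed
    show ?thesis using a1 a2 a3 by blast
  qed
qed

lemma goodL_intro:
  assumes "\<And>i j. i < m \<Longrightarrow> j < n \<Longrightarrow> L i j < c"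
    and "\<And>i1 j1 i2 j2. i1 < m \<Longrightarrow> j1 < n \<Longrightarrow> i2 < m \<Longrightarrow> j2 < n \<Longrightarrow> (i1, j1) \<noteq> (i2, j2) \<Longrightarrow>
       i2 = negi m i1 \<Longrightarrow> L i1 j1 \<noteq> L i2 j2"
    and "\<And>i1 j1 i2 j2. i1 < m \<Longrightarrow> j1 < n \<Longrightarrow> i2 < m \<Longrightarrow> j2 < n \<Longrightarrow> (i1, j1) \<noteq> (i2, j2) \<Longrightarrow>
       j2 = negi n j1 \<Longrightarrow> L i1 j1 \<noteq> L i2 j2"
  shows "goodL m n c L"
  using assms unfolding goodL_def by blast

lemma modinj:
  fixes a b c h :: nat
  assumes "b < h" "c < h" "(a + b) mod h = (a + c) mod h"
  shows "b = c"
proof -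
  have key: "b' = c'" if "b' \<le> c'" "c' < h" "(a + b') mod h = (a + c') mod h" for b' c'
  proof -
    have "h dvd (a + c') - (a + b')"
      using that mod_eq_dvd_iff_nat[of "a + b'" "a + c'" h] by simp
    then have "h dvd c' - b'" by simp
    moreover have "c' - b' < h" using that by simp
    ultimately have "c' - b' = 0" by (metis dvd_imp_le leD neq0_conv)
    then show ?thesis using that by simp
  qed
  show ?thesis
  proof (cases "b \<le> c")
    case True then show ?thesis using key assms by blast
  next
    case False then show ?thesis using key[of c b] assms by simp
  qed
qed

lemma goodA:
  assumes "even m" "even n" "m \<le> n"
  shows "goodL m n n (\<lambda>i j. (i + j) mod n)"
proof (rule goodL_intro)
  fix i j assume "i < m" "j < n" then show "(i + j) mod n < n" by simp
next
  fix i1 j1 i2 j2 assume a: "i1 < m" "j1 < n" "i2 < m" "j2 < n" "(i1, j1) \<noteq> (i2, j2)" "i2 = negi m i1"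
  then have "i2 = i1" "j1 \<noteq> j2" using assms negi_even by auto
  then show "(i1 + j1) mod n \<noteq> (i2 + j2) mod n" using modinj[of j1 n j2 i1] a by auto
next
  fix i1 j1 i2 j2 assume a: "i1 < m" "j1 < n" "i2 < m" "j2 < n" "(i1, j1) \<noteq> (i2, j2)" "j2 = negi n j1"
  then have "j2 = j1" "i1 \<noteq> i2" using assms negi_even by auto
  then show "(i1 + j1) mod n \<noteq> (i2 + j2) mod n" using modinj[of i1 n i2 j1] a assms
    by (auto simp: add.commute)
qed

definition LB :: "nat \<Rightarrow> nat \<Rightarrow> nat \<Rightarrow> nat" where
  "LB k i j = (if i \<le> k then (if j = 0 then i else if j = i then 0 else j)
               else (if j = 0 then i else if j = 1 then 0 else if j = i then 1 else j))"

lemma LB_pos: "j \<noteq> 0 \<Longrightarrow> j \<le> k \<Longrightarrow> LB k i j = j \<or> LB k i j = 0"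
  unfolding LB_def by auto

lemma LB_neg: "0 < k \<Longrightarrow> j \<noteq> 0 \<Longrightarrow> k < j \<Longrightarrow> LB k i j = j \<or> (LB k i j = 1 \<and> j = i)"
  unfolding LB_def by auto

lemma LB_row: "i < 2 * k \<Longrightarrow> j1 \<noteq> j2 \<Longrightarrow> LB k i j1 \<noteq> LB k i j2"
  unfolding LB_def by auto

lemma goodB:
  assumes "m \<le> 2 * k" "even m" "0 < k"
  shows "goodL m (2 * k + 1) (2 * k + 1) (LB k)"
proof (rule goodL_intro)
  fix i j assume "i < m" "j < 2 * k + 1" then show "LB k i j < 2 * k + 1"
    using assms unfolding LB_def by auto
next
  fix i1 j1 i2 j2 assume a: "i1 < m" "j1 < 2 * k + 1" "i2 < m" "j2 < 2 * k + 1" "(i1, j1) \<noteq> (i2, j2)" "i2 = negi m i1"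
  then have "i2 = i1" "j1 \<noteq> j2" using assms negi_even by auto
  then show "LB k i1 j1 \<noteq> LB k i2 j2" using LB_row[of i1 k j1 j2] a assms by auto
next
  fix i1 j1 i2 j2 assume a: "i1 < m" "j1 < 2 * k + 1" "i2 < m" "j2 < 2 * k + 1" "(i1, j1) \<noteq> (i2, j2)" "j2 = negi (2 * k + 1) j1"
  then have j2: "j2 = (if j1 = 0 then 0 else 2 * k + 1 - j1)" using negi_odd[of "2*k+1" j1] by simp
  show "LB k i1 j1 \<noteq> LB k i2 j2"
  proof (cases "j1 = 0")
    case True
    then have "LB k i1 j1 = i1" "LB k i2 j2 = i2" "i1 \<noteq> i2" using j2 a unfolding LB_def by auto
    then show ?thesis by simp
  next
    case False
    then have j2': "j2 = 2 * k + 1 - j1" "j2 \<noteq> 0" using j2 a by auto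
    show ?thesis
    proof (cases "j1 \<le> k")
      case True
      then have "k < j2" using j2' by simp
      then show ?thesis using LB_pos[of j1 k i1] LB_neg[of k j2 i2] True False j2' a assms by auto
    next
      case F2: False
      then have "j2 \<le> k" using j2' a by simp
      then show ?thesis using LB_pos[of j2 k i2] LB_neg[of k j1 i1] F2 False j2' a assms by auto
    qed
  qed
qed

definition LC :: "nat \<Rightarrow> nat \<Rightarrow> nat \<Rightarrow> nat \<Rightarrow> nat" where
  "LC t h i j = (if i = 0 then j else if i \<le> t then 2 * ((j div 2 + i) mod h)
                 else 2 * ((j div 2 + (2 * t + 1 - i)) mod h) + 1)"

lemma H1: "(a::nat) < h \<Longrightarrow> 0 < i \<Longrightarrow> i < h \<Longrightarrow> (a + i) mod h \<noteq> a"
  using modinj[of i h 0 a] by auto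

lemma H2: "(i1::nat) < h \<Longrightarrow> i2 < h \<Longrightarrow> i1 \<noteq> i2 \<Longrightarrow> (a + i1) mod h \<noteq> (a + i2) mod h"
  using modinj[of i1 h i2 a] by auto

lemma goodC:
  assumes "t < h"
  shows "goodL (2 * t + 1) (2 * h) (2 * h) (LC t h)"
proof (rule goodL_intro)
  fix i j assume "i < 2 * t + 1" "j < 2 * h"
  moreover have "2 * (x mod h) + 1 < 2 * h" for x
  proof -
    have "x mod h < h" using assms by simp
    then show ?thesis by linarith
  qed
  moreover have "2 * (x mod h) < 2 * h" for x using assms by simp
  ultimately show "LC t h i j < 2 * h" unfolding LC_def by auto
next
  fix i1 j1 i2 j2 assume a: "i1 < 2 * t + 1" "j1 < 2 * h" "i2 < 2 * t + 1" "j2 < 2 * h" "(i1, j1) \<noteq> (i2, j2)" "i2 = negi (2 * t + 1) i1"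
  then have i2: "i2 = (if i1 = 0 then 0 else 2 * t + 1 - i1)" using negi_odd[of "2*t+1" i1] by simp
  have par: "2 * x \<noteq> 2 * y + 1" for x y :: nat by presburger
  show "LC t h i1 j1 \<noteq> LC t h i2 j2"
  proof (cases "i1 = 0")
    case True then show ?thesis using a i2 unfolding LC_def by auto
  next
    case False
    show ?thesis
    proof (cases "i1 \<le> t")
      case True
      then have "t < i2" "i2 \<noteq> 0" using i2 False by auto
      then show ?thesis using True False par unfolding LC_def by (metis not_le)
    next
      case F2: False
      then have "i2 \<le> t" "i2 \<noteq> 0" using i2 False a by auto
      then show ?thesis using F2 False par unfolding LC_def by (metis not_le)
    qed
  qed
next
  fix i1 j1 i2 j2 assume a: "i1 < 2 * t + 1" "j1 < 2 * h" "i2 < 2 * t + 1" "j2 < 2 * h" "(i1, j1) \<noteq> (i2, j2)" "j2 = negi (2 * h) j1"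
  then have j: "j2 = j1" "i1 \<noteq> i2" using negi_even[of "2*h" j1] by auto
  define b where "b = j1 div 2"
  have b: "b < h" using a unfolding b_def by simp
  have par: "2 * x \<noteq> 2 * y + 1" for x y :: nat by presburger
  have cls: "\<And>i. i < 2 * t + 1 \<Longrightarrow> (i = 0 \<and> LC t h i j1 = j1) \<or>
     (0 < i \<and> i \<le> t \<and> LC t h i j1 = 2 * ((b + i) mod h)) \<or>
     (t < i \<and> (\<exists>u. 0 < u \<and> u \<le> t \<and> i + u = 2 * t + 1 \<and> LC t h i j1 = 2 * ((b + u) mod h) + 1))"
  proof -
    fix i assume i: "i < 2 * t + 1"
    consider "i = 0" | "0 < i" "i \<le> t" | "t < i" by linarith
    then show "?thesis i"
    proof cases
      case 1 then show ?thesis unfolding LC_def by simp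
    next
      case 2 then show ?thesis unfolding LC_def b_def by simp
    next
      case 3
      have "LC t h i j1 = 2 * ((b + (2 * t + 1 - i)) mod h) + 1" using 3 unfolding LC_def b_def by simp
      moreover have "0 < 2 * t + 1 - i" "2 * t + 1 - i \<le> t" "i + (2 * t + 1 - i) = 2 * t + 1" using 3 i by auto
      ultimately show ?thesis using 3 by blast
    qed
  qed
  have e1: "\<And>x. j1 = 2 * x \<Longrightarrow> b = x" unfolding b_def by simp
  have e2: "\<And>x. j1 = 2 * x + 1 \<Longrightarrow> b = x" unfolding b_def by simp
  have ht: "t < h" by (rule assms)
  show "LC t h i1 j1 \<noteq> LC t h i2 j2"
    unfolding j(1)
    using cls[OF a(1)] cls[OF a(3)] j(2) H1[OF b] H2[of _ h _ b] e1 e2 par ht b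
    apply (elim disjE conjE exE)
    apply (simp_all)
    apply (metis le_less_trans add_left_cancel)+
    done
qed

definition LD :: "nat \<Rightarrow> nat \<Rightarrow> nat \<Rightarrow> nat \<Rightarrow> nat" where
  "LD t k i j = (if i = 0 then j
     else if i \<le> t then (if j = 0 then i else if j \<le> k then j else if 2 * k + 1 - j = 1 then 2 else 1)
     else (if j = 0 then 2 * k + 1 - (2 * t + 1 - i) else if k < j then j else 2 * k + 1 - (if j = 1 then 2 else 1)))"

lemma LD_posrow: "0 < i \<Longrightarrow> i \<le> t \<Longrightarrow> t \<le> k \<Longrightarrow> 2 \<le> k \<Longrightarrow> j < 2 * k + 1 \<Longrightarrow>
   1 \<le> LD t k i j \<and> LD t k i j \<le> k"
  unfolding LD_def by auto

lemma LD_negrow: "t < i \<Longrightarrow> i < 2 * t + 1 \<Longrightarrow> t \<le> k \<Longrightarrow> 2 \<le> k \<Longrightarrow> j < 2 * k + 1 \<Longrightarrow>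
   k < LD t k i j \<and> LD t k i j \<le> 2 * k"
  unfolding LD_def by auto

lemma LD_colpos: "0 < j \<Longrightarrow> j \<le> k \<Longrightarrow>
   LD t k i j = j \<or> LD t k i j = 2 * k + 1 - (if j = 1 then 2 else 1)"
  unfolding LD_def by auto

lemma LD_colneg: "k < j \<Longrightarrow>
   LD t k i j = j \<or> LD t k i j = (if 2 * k + 1 - j = 1 then 2 else 1)"
  unfolding LD_def by auto

lemma goodD:
  assumes "t \<le> k" "2 \<le> k"
  shows "goodL (2 * t + 1) (2 * k + 1) (2 * k + 1) (LD t k)"
proof (rule goodL_intro)
  fix i j assume "i < 2 * t + 1" "j < 2 * k + 1"
  then show "LD t k i j < 2 * k + 1" using assms unfolding LD_def by auto
next
  fix i1 j1 i2 j2 assume a: "i1 < 2 * t + 1" "j1 < 2 * k + 1" "i2 < 2 * t + 1" "j2 < 2 * k + 1" "(i1, j1) \<noteq> (i2, j2)" "i2 = negi (2 * t + 1) i1"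
  then have i2: "i2 = (if i1 = 0 then 0 else 2 * t + 1 - i1)" using negi_odd[of "2*t+1" i1] by simp
  show "LD t k i1 j1 \<noteq> LD t k i2 j2"
  proof (cases "i1 = 0")
    case True then show ?thesis using a i2 unfolding LD_def by auto
  next
    case False
    show ?thesis
    proof (cases "i1 \<le> t")
      case True
      then have "t < i2" "i2 < 2 * t + 1" using i2 False by auto
      then show ?thesis using True False LD_posrow[of i1 t k j1] LD_negrow[of t i2 k j2] a assms by auto
    next
      case F2: False
      then have "0 < i2" "i2 \<le> t" using i2 False a by auto
      then show ?thesis using F2 False LD_posrow[of i2 t k j2] LD_negrow[of t i1 k j1] a assms by auto
    qed
  qed
next
  fix i1 j1 i2 j2 assume a: "i1 < 2 * t + 1" "j1 < 2 * k + 1" "i2 < 2 * t + 1" "j2 < 2 * k + 1" "(i1, j1) \<noteq> (i2, j2)" "j2 = negi (2 * k + 1) j1"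
  then have j2: "j2 = (if j1 = 0 then 0 else 2 * k + 1 - j1)" using negi_odd[of "2*k+1" j1] by simp
  show "LD t k i1 j1 \<noteq> LD t k i2 j2"
  proof (cases "j1 = 0")
    case True then show ?thesis using a j2 assms unfolding LD_def by auto
  next
    case False
    show ?thesis
    proof (cases "j1 \<le> k")
      case True
      then have "k < j2" "j2 = 2 * k + 1 - j1" using j2 False by auto
      then show ?thesis using True False LD_colpos[of j1 k t i1] LD_colneg[of k j2 t i2] a assms by (auto split: if_split_asm)
    next
      case F2: False
      then have "0 < j2" "j2 \<le> k" "j2 = 2 * k + 1 - j1" using j2 False a by auto
      then show ?thesis using F2 False LD_colpos[of j2 k t i2] LD_colneg[of k j1 t i1] a assms by (auto split: if_split_asm)
    qed
  qed
qed

definition LE :: "nat \<Rightarrow> nat \<Rightarrow> nat" where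
  "LE i j = [[0, 1, 2], [1, 1, 0], [2, 3, 2::nat]] ! i ! j"

lemma goodE: "goodL 3 3 4 LE"
proof -
  have e: "\<And>i::nat. i < 3 \<Longrightarrow> i = 0 \<or> i = 1 \<or> i = 2" by auto
  show ?thesis
    unfolding goodL_def
    apply (intro conjI allI impI)
     apply (auto dest!: e simp: LE_def)[1]
    apply (auto dest!: e simp: LE_def negi_def)
    done
qed

lemma transfer:
  fixes \<alpha> :: "'a::field \<Rightarrow> nat" and \<beta> :: "'b::field \<Rightarrow> nat"
  assumes g: "goodL m n c L" and ia: "inj \<alpha>" and ib: "inj \<beta>"
    and am: "\<And>x. \<alpha> x < m" and bn: "\<And>y. \<beta> y < n"
    and an: "\<And>x. \<alpha> (-x) = negi m (\<alpha> x)" and bneg: "\<And>y. \<beta> (-y) = negi n (\<beta> y)"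
  shows "latin_sum_array (UNIV::'a set) (UNIV::'b set) {0..<c} (\<lambda>x y. L (\<alpha> x) (\<beta> y))"
  unfolding latin_sum_array_def
proof (intro conjI ballI impI)
  fix x :: 'a and y :: 'b show "L (\<alpha> x) (\<beta> y) \<in> {0..<c}" using g am bn unfolding goodL_def by auto
next
  fix x1 x2 :: 'a and y1 y2 :: 'b assume ne: "(x1, y1) \<noteq> (x2, y2)"
  have ne': "(\<alpha> x1, \<beta> y1) \<noteq> (\<alpha> x2, \<beta> y2)" using ne ia ib by (auto dest: injD)
  have G: "\<And>i1 j1 i2 j2. i1 < m \<Longrightarrow> j1 < n \<Longrightarrow> i2 < m \<Longrightarrow> j2 < n \<Longrightarrow> (i1, j1) \<noteq> (i2, j2) \<Longrightarrow>
       (i2 = negi m i1 \<or> j2 = negi n j1) \<Longrightarrow> L i1 j1 \<noteq> L i2 j2"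
    using g unfolding goodL_def by blast
  {
    assume "x1 + x2 = 0"
    then have "x2 = - x1" by (simp add: eq_neg_iff_add_eq_0 add.commute)
    then have "\<alpha> x2 = negi m (\<alpha> x1)" using an by simp
    then show "L (\<alpha> x1) (\<beta> y1) \<noteq> L (\<alpha> x2) (\<beta> y2)" using G[OF am bn am bn ne'] by blast
  }
  {
    assume "y1 + y2 = 0"
    then have "y2 = - y1" by (simp add: eq_neg_iff_add_eq_0 add.commute)
    then have "\<beta> y2 = negi n (\<beta> y1)" using bneg by simp
    then show "L (\<alpha> x1) (\<beta> y1) \<noteq> L (\<alpha> x2) (\<beta> y2)" using G[OF am bn am bn ne'] by blast
  }
qed

lemma card_field_ge2: "2 \<le> card (UNIV::'a::{finite,field} set)"
proof -
  have "card {0::'a, 1} = 2" by simp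
  moreover have "card {0::'a, 1} \<le> card (UNIV::'a set)" by (rule card_mono) auto
  ultimately show ?thesis by simp
qed

theorem lemma11:
  assumes "card (UNIV::'a::{finite,field} set) \<le> card (UNIV::'b::{finite,field} set)"
  shows "\<exists>(C::nat set) (L::'a \<Rightarrow> 'b \<Rightarrow> nat).
           finite C \<and>
           card C = (if card (UNIV::'a set) = 3 \<and> card (UNIV::'b set) = 3 then 4
                     else card (UNIV::'b set)) \<and>
           latin_sum_array (UNIV::'a set) (UNIV::'b set) C L"
proof -
  define m where "m = card (UNIV::'a set)"
  define n where "n = card (UNIV::'b set)"
  have mn: "m \<le> n" using assms unfolding m_def n_def .
  have m2: "2 \<le> m" unfolding m_def by (rule card_field_ge2)
  obtain \<alpha> :: "'a \<Rightarrow> nat" where a: "inj \<alpha>" "\<And>x. \<alpha> x < m" "\<And>x. \<alpha> (-x) = negi m (\<alpha> x)"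
    using field_index unfolding m_def by blast
  obtain \<beta> :: "'b \<Rightarrow> nat" where b: "inj \<beta>" "\<And>x. \<beta> x < n" "\<And>x. \<beta> (-x) = negi n (\<beta> x)"
    using field_index unfolding n_def by blast
  define c where "c = (if m = 3 \<and> n = 3 then 4 else n)"
  have "\<exists>L'. goodL m n c L'"
  proof (cases "m = 3 \<and> n = 3")
    case True then show ?thesis using goodE unfolding c_def by auto
  next
    case notE: False
    then have c: "c = n" unfolding c_def by simp
    show ?thesis
    proof (cases "even m")
      case em: True
      show ?thesis
      proof (cases "even n")
        case True then show ?thesis using goodA[OF em True mn] c by auto
      next
        case False
        then obtain k where k: "n = 2 * k + 1" using oddE by blast
        have "m \<le> 2 * k" using em mn k by presburger
        moreover have "0 < k" using m2 mn k by simp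
        ultimately show ?thesis using goodB[of m k] em k c by auto
      qed
    next
      case om: False
      then obtain t where t: "m = 2 * t + 1" using oddE by blast
      show ?thesis
      proof (cases "even n")
        case True
        then obtain h where h: "n = 2 * h" by blast
        have "t < h" using mn t h by simp
        then show ?thesis using goodC[of t h] t h c by auto
      next
        case False
        then obtain k where k: "n = 2 * k + 1" using oddE by blast
        have "t \<le> k" using mn t k by simp
        moreover have "2 \<le> k" using m2 mn t k notE by auto
        ultimately show ?thesis using goodD[of t k] t k c by auto
      qed
    qed
  qed
  then obtain L' where L': "goodL m n c L'" by blast
  have lat: "latin_sum_array (UNIV::'a set) (UNIV::'b set) {0..<c} (\<lambda>x y. L' (\<alpha> x) (\<beta> y))"
    by (rule transfer[OF L' a(1) b(1) a(2) b(2) a(3) b(3)])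
  show ?thesis
    apply (rule exI[of _ "{0..<c}"], rule exI[of _ "\<lambda>x y. L' (\<alpha> x) (\<beta> y)"])
    using lat unfolding c_def m_def n_def by simp
qed

end
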